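(* Let $n\ge 2$. For $0\le k\le n-2$, $$a(n,k)={\left[ n \atop n-k\right]}_2 .$$
   Context: $A_n$ is the alternating group on $\{1,\dots,n\}$, $T(A_n)=\{(1\,2)(i\,j)\mid 1\le i<j\le n\}$, $\ell_{T(A_n)}(v)=\min\{r\ge 0\mid v=t_1\cdots t_r,\ t_i\in T(A_n)\}$, and $a(n,k)$ is the number of $v\in A_n$ with $\ell_{T(A_n)}(v)=k$. The 2-restricted unsigned Stirling number of the first kind ${\left[ n \atop j\right]}_2$ is the number of permutations of $\{1,\dots,n\}$ with exactly $j$ cycles (fixed points counted) in which $1$ and $2$ lie in distinct cycles. *)

theory Defs
  imports "HOL-Combinatorics.Combinatorics"
begin

definition alt_group_set :: "nat \<Rightarrow> (nat \<Rightarrow> nat) set" where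
  "alt_group_set n = {p. p permutes {1..n} \<and> evenperm p}"

definition T_alt :: "nat \<Rightarrow> (nat \<Rightarrow> nat) set" where
  "T_alt n = {transpose 1 2 \<circ> transpose i j | i j. 1 \<le> i \<and> i < j \<and> j \<le> n}"

definition len_T :: "nat \<Rightarrow> (nat \<Rightarrow> nat) \<Rightarrow> nat" where
  "len_T n v = (LEAST r. \<exists>ts. length ts = r \<and> set ts \<subseteq> T_alt n \<and> v = foldr (\<circ>) ts id)"

definition a_count :: "nat \<Rightarrow> nat \<Rightarrow> nat" where
  "a_count n k = card {v \<in> alt_group_set n. len_T n v = k}"

definition cycle_of :: "(nat \<Rightarrow> nat) \<Rightarrow> nat \<Rightarrow> nat set" where
  "cycle_of p x = {y. \<exists>m. (p ^^ m) x = y}"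

definition num_cycles :: "nat \<Rightarrow> (nat \<Rightarrow> nat) \<Rightarrow> nat" where
  "num_cycles n p = card (cycle_of p ` {1..n})"

definition stirling1_2 :: "nat \<Rightarrow> nat \<Rightarrow> nat" where
  "stirling1_2 n j = card {p. p permutes {1..n} \<and> num_cycles n p = j \<and>
                               cycle_of p 1 \<noteq> cycle_of p 2}"

end

theory Submission
  imports Defs
begin

lemma cyc_self: "x \<in> cycle_of p x"
  unfolding cycle_of_def by (auto intro: exI[of _ 0])

lemma cyc_step: "y \<in> cycle_of p x \<Longrightarrow> p y \<in> cycle_of p x"
  unfolding cycle_of_def by (auto intro: exI[of _ "Suc m" for m])

lemma cyc_closure:
  assumes "x \<in> A" "\<And>y. y \<in> A \<Longrightarrow> p y \<in> A"
  shows "cycle_of p x \<subseteq> A"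
proof
  fix z assume "z \<in> cycle_of p x"
  then obtain m where z: "z = (p ^^ m) x" unfolding cycle_of_def by auto
  have "(p ^^ m) x \<in> A" by (induction m) (use assms in auto)
  then show "z \<in> A" using z by simp
qed

lemma cyc_trans: "y \<in> cycle_of p x \<Longrightarrow> cycle_of p y \<subseteq> cycle_of p x"
  by (rule cyc_closure) (auto intro: cyc_step)

lemma cyc_orbit: "permutation p \<Longrightarrow> cycle_of p x = orbit p x"
  unfolding cycle_of_def by (auto simp: orbit_altdef_permutation)

lemma cyc_sym: "permutation p \<Longrightarrow> y \<in> cycle_of p x \<Longrightarrow> x \<in> cycle_of p y"
  using orbit_swap permutation_self_in_orbit cyc_orbit by metis

lemma cyc_eq: "permutation p \<Longrightarrow> y \<in> cycle_of p x \<Longrightarrow> cycle_of p y = cycle_of p x"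
  by (meson cyc_sym cyc_trans subset_antisym)

lemma cyc_sub: "p permutes S \<Longrightarrow> x \<in> S \<Longrightarrow> cycle_of p x \<subseteq> S"
  by (rule cyc_closure) (auto simp: permutes_in_image)

lemma cyc_id: "cycle_of id x = {x}"
  unfolding cycle_of_def by auto

lemma merge_sub:
  assumes "b \<notin> cycle_of w a"
  shows "cycle_of w a \<subseteq> cycle_of (transpose a b \<circ> w) a"
proof
  fix z assume "z \<in> cycle_of w a"
  then obtain m where z: "z = (w ^^ m) a" unfolding cycle_of_def by auto
  have "(w ^^ m) a \<in> cycle_of (transpose a b \<circ> w) a"
  proof (induction m)
    case 0 then show ?case by (simp add: cyc_self)
  next
    case (Suc m)
    let ?y = "(w ^^ m) a"
    have yc: "?y \<in> cycle_of w a" unfolding cycle_of_def by auto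
    have wy: "w ?y \<noteq> b" using cyc_step[OF yc] assms by auto
    have hy: "(transpose a b \<circ> w) ?y \<in> cycle_of (transpose a b \<circ> w) a"
      using cyc_step[OF Suc] .
    have "a \<in> cycle_of (transpose a b \<circ> w) a" by (rule cyc_self)
    have eq: "(w ^^ Suc m) a = transpose a b ((transpose a b \<circ> w) ?y)" by simp
    show ?case
    proof (cases "(transpose a b \<circ> w) ?y = a")
      case True then show ?thesis using eq wy by simp
    next
      case F1: False show ?thesis
      proof (cases "(transpose a b \<circ> w) ?y = b")
        case True then show ?thesis using eq cyc_self[of a "transpose a b \<circ> w"]
          by (metis transpose_apply_second)
      next
        case False
        then have "(w ^^ Suc m) a = (transpose a b \<circ> w) ?y" using eq F1
          by (simp add: transpose_def)
        then show ?thesis using hy by (simp only:)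
      qed
    qed
  qed
  then show "z \<in> cycle_of (transpose a b \<circ> w) a" using z by simp
qed

lemma pred_in_cyc:
  assumes "permutation w"
  obtains y where "y \<in> cycle_of w a" "w y = a"
proof -
  have "w a \<in> cycle_of w a" by (rule cyc_step[OF cyc_self])
  then have "a \<in> cycle_of w (w a)" using cyc_sym assms by blast
  then obtain m where "(w ^^ m) (w a) = a" unfolding cycle_of_def by auto
  then have "w ((w ^^ m) a) = a" by (metis comp_apply funpow_Suc_right funpow_swap1)
  moreover have "(w ^^ m) a \<in> cycle_of w a" unfolding cycle_of_def by auto
  ultimately show ?thesis using that by blast
qed

lemma merge:
  assumes fin: "finite S" and w: "w permutes S" and ab: "a \<in> S" "b \<in> S" "a \<noteq> b"
    and nb: "b \<notin> cycle_of w a"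
  shows "b \<in> cycle_of (transpose a b \<circ> w) a"
    and "card (cycle_of w ` S) = card (cycle_of (transpose a b \<circ> w) ` S) + 1"
proof -
  define w' where "w' = transpose a b \<circ> w"
  have pw: "permutation w" using fin w permutation_permutes by blast
  have w'S: "w' permutes S" unfolding w'_def
    by (rule permutes_compose[OF w permutes_swap_id[OF ab(1,2)]])
  have pw': "permutation w'" using fin w'S permutation_permutes by blast
  define Ca where "Ca = cycle_of w a"
  define Cb where "Cb = cycle_of w b"
  define Ob where "Ob = cycle_of w' a"
  define U where "U = Ca \<union> Cb"
  have na: "a \<notin> Cb" using nb cyc_sym[OF pw] unfolding Cb_def by blast
  have s1: "Ca \<subseteq> Ob" unfolding Ca_def Ob_def w'_def by (rule merge_sub[OF nb])
  obtain y where y: "y \<in> Ca" "w y = a" using pred_in_cyc[OF pw] unfolding Ca_def by metis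
  have bO: "b \<in> Ob" using cyc_step[of y w' a] s1 y by (auto simp: Ob_def w'_def)
  have s2: "Cb \<subseteq> cycle_of w' b" unfolding Cb_def w'_def
    using merge_sub[of a w b] na unfolding Cb_def by (simp add: transpose_commute)
  have s3: "cycle_of w' b \<subseteq> Ob" using cyc_trans bO unfolding Ob_def by blast
  have UO: "U \<subseteq> Ob" using s1 s2 s3 unfolding U_def by blast
  have aU: "a \<in> U" "b \<in> U" unfolding U_def Ca_def Cb_def by (auto simp: cyc_self)
  have OU: "Ob \<subseteq> U" unfolding Ob_def
  proof (rule cyc_closure)
    show "a \<in> U" by fact
    fix z assume "z \<in> U"
    then have "w z \<in> U" unfolding U_def Ca_def Cb_def by (auto intro: cyc_step)
    then show "w' z \<in> U" using aU by (auto simp: w'_def transpose_def)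
  qed
  have OeqU: "Ob = U" using UO OU by blast
  show "b \<in> cycle_of (transpose a b \<circ> w) a" using bO by (simp add: Ob_def w'_def)
  have outside: "cycle_of w' x = cycle_of w x" if x: "x \<notin> U" for x
  proof -
    have disj: "a \<notin> cycle_of w x" "b \<notin> cycle_of w x"
      using x cyc_sym[OF pw] unfolding U_def Ca_def Cb_def by blast+
    have "\<And>m. (w' ^^ m) x = (w ^^ m) x"
    proof -
      fix m show "(w' ^^ m) x = (w ^^ m) x"
      proof (induction m)
        case (Suc m)
        have "(w ^^ Suc m) x \<in> cycle_of w x" unfolding cycle_of_def by blast
        then have "w ((w ^^ m) x) \<noteq> a" "w ((w ^^ m) x) \<noteq> b" using disj by auto
        then show ?case using Suc by (simp add: w'_def)
      qed simp
    qed
    then show ?thesis unfolding cycle_of_def by simp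
  qed
  have inside: "cycle_of w' x = U" if x: "x \<in> U" for x
    using cyc_eq[OF pw'] x OeqU unfolding Ob_def by blast
  define R where "R = cycle_of w ` (S - U)"
  have finR: "finite R" unfolding R_def using fin by simp
  have notR: "C \<notin> R" if "C = Ca \<or> C = Cb \<or> C = U" for C
  proof
    assume "C \<in> R"
    then obtain x where x: "x \<in> S - U" "C = cycle_of w x" unfolding R_def by auto
    then have "x \<in> C" by (simp add: cyc_self)
    then show False using that x unfolding U_def by auto
  qed
  have CaCb: "Ca \<noteq> Cb" using na aU unfolding Ca_def by (auto simp: cyc_self)
  have US: "U \<subseteq> S" unfolding U_def Ca_def Cb_def using cyc_sub[OF w] ab by blast
  have img1: "cycle_of w ` S = insert Ca (insert Cb R)"
  proof -
    have "cycle_of w x \<in> {Ca, Cb}" if "x \<in> U" for x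
      using that cyc_eq[OF pw] unfolding U_def Ca_def Cb_def by blast
    moreover have "Ca \<in> cycle_of w ` S" "Cb \<in> cycle_of w ` S" using ab
      unfolding Ca_def Cb_def by auto
    ultimately show ?thesis unfolding R_def by blast
  qed
  have img2: "cycle_of w' ` S = insert U R"
  proof -
    have UU: "U \<in> cycle_of w' ` S" using inside aU US by force
    show ?thesis
    proof (intro equalityI subsetI)
      fix C assume "C \<in> cycle_of w' ` S"
      then obtain x where x: "x \<in> S" "C = cycle_of w' x" by auto
      show "C \<in> insert U R"
      proof (cases "x \<in> U")
        case True then show ?thesis using inside x by simp
      next
        case False then show ?thesis using outside x unfolding R_def by auto
      qed
    next
      fix C assume "C \<in> insert U R"
      then consider "C = U" | "C \<in> R" by blast
      then show "C \<in> cycle_of w' ` S"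
      proof cases
        case 1 then show ?thesis using UU by simp
      next
        case 2
        then obtain x where x: "x \<in> S" "x \<notin> U" "C = cycle_of w x" unfolding R_def by auto
        then have "C = cycle_of w' x" using outside by simp
        then show ?thesis using x by blast
      qed
    qed
  qed
  show "card (cycle_of w ` S) = card (cycle_of (transpose a b \<circ> w) ` S) + 1"
    unfolding w'_def[symmetric] img1 img2 using finR notR CaCb by simp
qed

lemma split_notin:
  assumes w: "w permutes S" and ab: "a \<noteq> b" and bc: "b \<in> cycle_of w a"
  shows "b \<notin> cycle_of (transpose a b \<circ> w) a"
proof -
  obtain m where m: "(w ^^ m) a = b" using bc unfolding cycle_of_def by auto
  have m0: "0 < m \<and> (w ^^ m) a \<in> {a, b}" using m ab by (cases m) auto
  define k where "k = (LEAST k. 0 < k \<and> (w ^^ k) a \<in> {a, b})"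
  have k: "0 < k" "(w ^^ k) a \<in> {a, b}" using LeastI[where P="\<lambda>k. 0 < k \<and> (w ^^ k) a \<in> {a, b}", OF m0] unfolding k_def by auto
  have kmin: "(w ^^ j) a \<notin> {a, b}" if "0 < j" "j < k" for j
    using not_less_Least[of j "\<lambda>k. 0 < k \<and> (w ^^ k) a \<in> {a, b}"] that unfolding k_def by auto
  define P where "P = {(w ^^ j) a | j. j < k}"
  have notinP: "b \<notin> P"
  proof
    assume "b \<in> P"
    then obtain j where j: "j < k" "(w ^^ j) a = b" unfolding P_def by auto
    show False using kmin[of j] j ab by (cases j) auto
  qed
  have kb: "(w ^^ k) a = b"
  proof (rule ccontr)
    assume "(w ^^ k) a \<noteq> b"
    then have ka: "(w ^^ k) a = a" using k by auto
    have "cycle_of w a \<subseteq> P"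
    proof (rule cyc_closure)
      show "a \<in> P" unfolding P_def using k by (auto intro: exI[of _ 0])
      fix y assume "y \<in> P"
      then obtain j where j: "j < k" "y = (w ^^ j) a" unfolding P_def by auto
      show "w y \<in> P"
      proof (cases "Suc j < k")
        case True then show ?thesis unfolding P_def using j by (auto intro!: exI[of _ "Suc j"])
      next
        case False then have "Suc j = k" using j by auto
        then have "w y = a" using ka j by (metis comp_apply funpow.simps(2))
        then show ?thesis unfolding P_def using k by (auto intro: exI[of _ 0])
      qed
    qed
    then show False using bc notinP by blast
  qed
  have "cycle_of (transpose a b \<circ> w) a \<subseteq> P"
  proof (rule cyc_closure)
    show "a \<in> P" unfolding P_def using k by (auto intro: exI[of _ 0])
    fix y assume "y \<in> P"
    then obtain j where j: "j < k" "y = (w ^^ j) a" unfolding P_def by auto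
    show "(transpose a b \<circ> w) y \<in> P"
    proof (cases "Suc j < k")
      case True
      then have "(w ^^ Suc j) a \<notin> {a, b}" using kmin[of "Suc j"] by blast
      moreover have "w y = (w ^^ Suc j) a" using j by simp
      ultimately have "(transpose a b \<circ> w) y = (w ^^ Suc j) a" by simp
      then show ?thesis unfolding P_def using True by blast
    next
      case False then have "Suc j = k" using j by auto
      then have "w y = b" using kb j by (metis comp_apply funpow.simps(2))
      then show ?thesis unfolding P_def using k by (auto intro: exI[of _ 0])
    qed
  qed
  then show ?thesis using notinP by blast
qed

lemma split:
  assumes fin: "finite S" and w: "w permutes S" and ab: "a \<in> S" "b \<in> S" "a \<noteq> b"
    and bc: "b \<in> cycle_of w a"
  shows "b \<notin> cycle_of (transpose a b \<circ> w) a"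
    and "card (cycle_of (transpose a b \<circ> w) ` S) = card (cycle_of w ` S) + 1"
proof -
  show nb: "b \<notin> cycle_of (transpose a b \<circ> w) a" by (rule split_notin[OF w ab(3) bc])
  have w'S: "transpose a b \<circ> w permutes S"
    by (rule permutes_compose[OF w permutes_swap_id[OF ab(1,2)]])
  have "transpose a b \<circ> (transpose a b \<circ> w) = w" by (simp add: comp_assoc[symmetric])
  then show "card (cycle_of (transpose a b \<circ> w) ` S) = card (cycle_of w ` S) + 1"
    using merge(2)[OF fin w'S ab nb] by simp
qed

definition cm :: "nat \<Rightarrow> (nat \<Rightarrow> nat) \<Rightarrow> nat" where
  "cm n v = max (num_cycles n v) (num_cycles n (transpose 1 2 \<circ> v))"

lemma nc_le: "num_cycles n p \<le> n"
  unfolding num_cycles_def by (metis card_atLeastAtMost card_image_le diff_Suc_1 finite_atLeastAtMost)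

lemma cm_le: "cm n v \<le> n"
  unfolding cm_def using nc_le by simp

lemma nc_id: "num_cycles n id = n"
proof -
  have "cycle_of id ` {1..n} = (\<lambda>x. {x}) ` {1..n}" by (simp add: cyc_id)
  moreover have "card ((\<lambda>x. {x}) ` {1..n}) = n" by (subst card_image) (auto simp: inj_on_def)
  ultimately show ?thesis unfolding num_cycles_def by simp
qed

lemma nc_eq_n:
  assumes p: "p permutes {1..n}" and c: "num_cycles n p = n"
  shows "p = id"
proof (rule ccontr)
  assume "p \<noteq> id"
  then obtain x where x: "p x \<noteq> x" by (auto simp: fun_eq_iff)
  then have xS: "x \<in> {1..n}" using p by (meson permutes_not_in)
  have pxS: "p x \<in> {1..n}" using permutes_in_image[OF p] xS by blast
  have "inj_on (cycle_of p) {1..n}" using c unfolding num_cycles_def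
    by (subst inj_on_iff_eq_card) auto
  moreover have "cycle_of p (p x) = cycle_of p x"
  proof -
    have pp: "permutation p" using p permutation_permutes finite_atLeastAtMost by blast
    have "p x \<in> cycle_of p x" by (rule cyc_step[OF cyc_self])
    then show ?thesis by (rule cyc_eq[OF pp])
  qed
  ultimately show False using x xS pxS by (meson inj_onD)
qed

lemma nc_trans_le:
  assumes p: "p permutes {1..n}" and xy: "x \<in> {1..n}" "y \<in> {1..n}" "x \<noteq> y"
  shows "num_cycles n p \<le> num_cycles n (transpose x y \<circ> p) + 1"
proof (cases "y \<in> cycle_of p x")
  case True
  show ?thesis using split(2)[OF _ p xy True] unfolding num_cycles_def by simp
next
  case False
  show ?thesis using merge(2)[OF _ p xy False] unfolding num_cycles_def by simp
qed

lemma conj12: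
  "transpose 1 2 \<circ> transpose i j
     = transpose (transpose 1 2 i) (transpose 1 2 j) \<circ> transpose (1::nat) 2"
  by (rule ext) (auto simp: transpose_def)

lemma sig_in: "n \<ge> 2 \<Longrightarrow> x \<in> {1..n} \<Longrightarrow> transpose 1 2 x \<in> {1..(n::nat)}"
  by (auto simp: transpose_def)

lemma sig_perm: "n \<ge> 2 \<Longrightarrow> transpose 1 2 permutes {1..(n::nat)}"
  by (rule permutes_swap_id) auto

lemma T_memI: "1 \<le> i \<Longrightarrow> i < j \<Longrightarrow> j \<le> n \<Longrightarrow> transpose 1 2 \<circ> transpose i j \<in> T_alt n"
  unfolding T_alt_def by blast

lemma T_memI':
  assumes "a \<in> {1..n}" "b \<in> {1..n}" "a \<noteq> b"
  shows "transpose 1 2 \<circ> transpose a b \<in> T_alt n"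
proof (cases "a < b")
  case True then show ?thesis using assms by (intro T_memI) auto
next
  case False then show ?thesis using assms T_memI[of b a n] by (simp add: transpose_commute)
qed

lemma T_perm:
  assumes "n \<ge> 2" "t \<in> T_alt n"
  shows "t permutes {1..n}" "evenperm t"
proof -
  obtain i j where t: "t = transpose 1 2 \<circ> transpose i j" "1 \<le> i" "i < j" "j \<le> n"
    using assms(2) unfolding T_alt_def by blast
  have p1: "transpose i j permutes {1..n}" using t by (intro permutes_swap_id) auto
  show "t permutes {1..n}" unfolding t(1) by (rule permutes_compose[OF p1 sig_perm[OF assms(1)]])
  show "evenperm t" unfolding t(1)
    by (subst evenperm_comp) (use t in \<open>auto simp: evenperm_swap permutation_swap_id\<close>)
qed

lemma LB:
  assumes n: "n \<ge> 2" and v: "v permutes {1..n}" and t: "t \<in> T_alt n"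
  shows "cm n v \<le> cm n (t \<circ> v) + 1"
proof -
  obtain i j where tt: "t = transpose 1 2 \<circ> transpose i j" "1 \<le> i" "i < j" "j \<le> n"
    using t unfolding T_alt_def by blast
  have ij: "i \<in> {1..n}" "j \<in> {1..n}" "i \<noteq> j" using tt by auto
  have "num_cycles n v \<le> num_cycles n (transpose i j \<circ> v) + 1"
    by (rule nc_trans_le[OF v ij])
  moreover have "transpose i j \<circ> v = transpose 1 2 \<circ> (t \<circ> v)"
    unfolding tt(1) by (rule ext) simp
  ultimately have A: "num_cycles n v \<le> cm n (t \<circ> v) + 1" unfolding cm_def by simp
  have v2: "transpose 1 2 \<circ> v permutes {1..n}" by (rule permutes_compose[OF v sig_perm[OF n]])
  have ij2: "transpose 1 2 i \<in> {1..n}" "transpose 1 2 j \<in> {1..n}"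
      "transpose 1 2 i \<noteq> transpose 1 2 j"
    using sig_in[OF n] ij by (auto simp: transpose_eq_iff)
  have "num_cycles n (transpose 1 2 \<circ> v)
      \<le> num_cycles n (transpose (transpose 1 2 i) (transpose 1 2 j) \<circ> (transpose 1 2 \<circ> v)) + 1"
    by (rule nc_trans_le[OF v2 ij2])
  moreover have "transpose (transpose 1 2 i) (transpose 1 2 j) \<circ> (transpose 1 2 \<circ> v) = t \<circ> v"
    unfolding tt(1) conj12 by (simp add: comp_assoc)
  ultimately have B: "num_cycles n (transpose 1 2 \<circ> v) \<le> cm n (t \<circ> v) + 1"
    unfolding cm_def by simp
  show ?thesis using A B unfolding cm_def by simp
qed

lemma Tinv:
  assumes n: "n \<ge> 2" and t: "t \<in> T_alt n"
  shows "\<exists>t'\<in>T_alt n. t' \<circ> t = id"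
proof -
  obtain i j where tt: "t = transpose 1 2 \<circ> transpose i j" "1 \<le> i" "i < j" "j \<le> n"
    using t unfolding T_alt_def by blast
  have ij: "i \<in> {1..n}" "j \<in> {1..n}" "i \<noteq> j" using tt by auto
  have ij2: "transpose 1 2 i \<in> {1..n}" "transpose 1 2 j \<in> {1..n}"
      "transpose 1 2 i \<noteq> transpose 1 2 j"
    using sig_in[OF n] ij by (auto simp: transpose_eq_iff)
  define t' where "t' = transpose 1 2 \<circ> transpose (transpose 1 2 i) (transpose 1 2 j)"
  have "t' \<in> T_alt n" unfolding t'_def by (rule T_memI'[OF ij2])
  moreover have "t' = transpose i j \<circ> transpose 1 2" unfolding t'_def conj12 by simp
  then have "t' \<circ> t = id" unfolding tt(1) by (rule_tac ext) simp
  ultimately show ?thesis by blast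
qed

lemma nonid_pair:
  assumes p: "p permutes {1..n}" and ne: "p \<noteq> id"
  obtains a b where "a \<in> {1..n}" "b \<in> {1..n}" "a \<noteq> b" "b \<in> cycle_of p a"
proof -
  obtain x where x: "p x \<noteq> x" using ne by (auto simp: fun_eq_iff)
  then have xS: "x \<in> {1..n}" using p by (meson permutes_not_in)
  have pxS: "p x \<in> {1..n}" using permutes_in_image[OF p] xS by blast
  have "p x \<in> cycle_of p x" by (rule cyc_step[OF cyc_self])
  then show ?thesis using that xS pxS x by metis
qed

lemma EX:
  assumes n: "n \<ge> 2" and v: "v permutes {1..n}" and c: "cm n v < n"
  shows "\<exists>t\<in>T_alt n. cm n v < cm n (t \<circ> v)"
proof (cases "num_cycles n (transpose 1 2 \<circ> v) \<le> num_cycles n v")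
  case True
  then have cv: "cm n v = num_cycles n v" unfolding cm_def by simp
  then have "v \<noteq> id" using c nc_id by auto
  then obtain a b where ab: "a \<in> {1..n}" "b \<in> {1..n}" "a \<noteq> b" "b \<in> cycle_of v a"
    using nonid_pair[OF v] by blast
  have sp: "num_cycles n (transpose a b \<circ> v) = num_cycles n v + 1"
    using split(2)[OF _ v ab] unfolding num_cycles_def by simp
  define t where "t = transpose 1 2 \<circ> transpose a b"
  have tT: "t \<in> T_alt n" unfolding t_def by (rule T_memI'[OF ab(1-3)])
  have "transpose 1 2 \<circ> (t \<circ> v) = transpose a b \<circ> v" unfolding t_def by (rule ext) simp
  then have "cm n v < cm n (t \<circ> v)" using sp cv unfolding cm_def by simp
  then show ?thesis using tT by blast
next
  case False
  define w where "w = transpose 1 2 \<circ> v"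
  have w: "w permutes {1..n}" unfolding w_def by (rule permutes_compose[OF v sig_perm[OF n]])
  have cw: "cm n v = num_cycles n w" using False unfolding cm_def w_def by simp
  then have "w \<noteq> id" using c nc_id by auto
  then obtain a b where ab: "a \<in> {1..n}" "b \<in> {1..n}" "a \<noteq> b" "b \<in> cycle_of w a"
    using nonid_pair[OF w] by blast
  have sp: "num_cycles n (transpose a b \<circ> w) = num_cycles n w + 1"
    using split(2)[OF _ w ab] unfolding num_cycles_def by simp
  have ab2: "transpose 1 2 a \<in> {1..n}" "transpose 1 2 b \<in> {1..n}"
      "transpose 1 2 a \<noteq> transpose 1 2 b"
    using sig_in[OF n] ab by (auto simp: transpose_eq_iff)
  define t where "t = transpose 1 2 \<circ> transpose (transpose 1 2 a) (transpose 1 2 b)"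
  have tT: "t \<in> T_alt n" unfolding t_def by (rule T_memI'[OF ab2])
  have "t \<circ> v = transpose a b \<circ> w" unfolding t_def conj12 w_def by (simp add: comp_assoc)
  then have "cm n v < cm n (t \<circ> v)" using sp cw unfolding cm_def by simp
  then show ?thesis using tT by blast
qed

lemma foldr_nil: "foldr (\<circ>) [] id = id" by simp
lemma foldr_cons: "foldr (\<circ>) (t # ts) id = t \<circ> foldr (\<circ>) ts id" by simp

lemma foldr_perm:
  assumes n: "n \<ge> 2" shows "set ts \<subseteq> T_alt n \<Longrightarrow> foldr (\<circ>) ts id permutes {1..n}"
proof (induction ts)
  case (Cons t ts)
  then have "t \<in> T_alt n" "set ts \<subseteq> T_alt n" by auto
  then have "t \<circ> foldr (\<circ>) ts id permutes {1..n}"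
    using Cons.IH permutes_compose T_perm(1)[OF n] by blast
  then show ?case unfolding foldr_cons .
qed (simp add: permutes_id)

lemma lower:
  assumes n: "n \<ge> 2" shows "set ts \<subseteq> T_alt n \<Longrightarrow> n \<le> cm n (foldr (\<circ>) ts id) + length ts"
proof (induction ts)
  case Nil
  have cmid: "cm n id = n" by (metis cm_def nc_id nc_le max.absorb1)
  show ?case unfolding foldr_nil list.size(3) cmid by simp
next
  case (Cons t ts)
  then have h: "t \<in> T_alt n" "set ts \<subseteq> T_alt n" by auto
  have ih: "n \<le> cm n (foldr (\<circ>) ts id) + length ts" using Cons.IH h(2) .
  have "cm n (foldr (\<circ>) ts id) \<le> cm n (t \<circ> foldr (\<circ>) ts id) + 1"
    using LB[OF n foldr_perm[OF n h(2)] h(1)] .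
  then show ?case unfolding foldr_cons list.size(4) using ih by linarith
qed

lemma upper:
  assumes n: "n \<ge> 2"
  shows "v \<in> alt_group_set n \<Longrightarrow> k = n - cm n v \<Longrightarrow>
    \<exists>ts. length ts = k \<and> set ts \<subseteq> T_alt n \<and> v = foldr (\<circ>) ts id"
proof (induction k arbitrary: v)
  case 0
  then have v: "v permutes {1..n}" "evenperm v" unfolding alt_group_set_def by auto
  have "cm n v = n" using 0 cm_le[of n v] by simp
  then consider "num_cycles n v = n" | "num_cycles n (transpose 1 2 \<circ> v) = n"
    unfolding cm_def by (metis max_def)
  then have "v = id"
  proof cases
    case 1 then show ?thesis using nc_eq_n v by blast
  next
    case 2
    have "transpose 1 2 \<circ> v = id"
      using nc_eq_n[OF permutes_compose[OF v(1) sig_perm[OF n]] 2] .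
    have "v = transpose 1 2 \<circ> (transpose 1 2 \<circ> v)" by (rule ext) simp
    then have "v = transpose 1 2" using \<open>transpose 1 2 \<circ> v = id\<close> by simp
    then show ?thesis using v(2) by (simp add: evenperm_swap)
  qed
  then show ?case by (intro exI[of _ "[]"]) simp
next
  case (Suc k)
  then have v: "v permutes {1..n}" "evenperm v" unfolding alt_group_set_def by auto
  have "cm n v < n" using Suc.prems by simp
  then obtain t where t: "t \<in> T_alt n" "cm n v < cm n (t \<circ> v)" using EX[OF n v(1)] by blast
  obtain t' where t': "t' \<in> T_alt n" "t' \<circ> t = id" using Tinv[OF n t(1)] by blast
  have tv: "t \<circ> v permutes {1..n}" by (rule permutes_compose[OF v(1) T_perm(1)[OF n t(1)]])
  have "cm n (t \<circ> v) \<le> cm n (t' \<circ> (t \<circ> v)) + 1" by (rule LB[OF n tv t'(1)])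
  moreover have tt: "t' \<circ> (t \<circ> v) = v"
  proof -
    have "t' \<circ> (t \<circ> v) = (t' \<circ> t) \<circ> v" by (simp only: comp_assoc)
    then show ?thesis using t'(2) by simp
  qed
  ultimately have "cm n (t \<circ> v) = cm n v + 1" using t(2) by simp
  then have k: "k = n - cm n (t \<circ> v)" using Suc.prems by simp
  have pt: "permutation t" using T_perm(1)[OF n t(1)] permutation_permutes by blast
  have pv: "permutation v" using v(1) permutation_permutes by blast
  have "evenperm (t \<circ> v)" using evenperm_comp[OF pt pv] T_perm(2)[OF n t(1)] v(2) by simp
  then have "t \<circ> v \<in> alt_group_set n" using tv unfolding alt_group_set_def by simp
  then obtain ts where ts: "length ts = k" "set ts \<subseteq> T_alt n" "t \<circ> v = foldr (\<circ>) ts id"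
    using Suc.IH k by blast
  have "foldr (\<circ>) (t' # ts) id = v" unfolding foldr_cons ts(3)[symmetric] by (rule tt)
  moreover have "length (t' # ts) = Suc k" using ts(1) by simp
  moreover have "set (t' # ts) \<subseteq> T_alt n" using ts(2) t'(1) by simp
  ultimately show ?case by (metis (no_types))
qed

lemma len_eq:
  assumes n: "n \<ge> 2" and v: "v \<in> alt_group_set n"
  shows "len_T n v = n - cm n v"
  unfolding len_T_def
proof (rule Least_equality)
  show "\<exists>ts. length ts = n - cm n v \<and> set ts \<subseteq> T_alt n \<and> v = foldr (\<circ>) ts id"
    using upper[OF n v refl] .
  fix r assume "\<exists>ts. length ts = r \<and> set ts \<subseteq> T_alt n \<and> v = foldr (\<circ>) ts id"
  then obtain ts where "length ts = r" "set ts \<subseteq> T_alt n" "v = foldr (\<circ>) ts id" by blast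
  then show "n - cm n v \<le> r" using lower[OF n, of ts] by simp
qed

lemma tt_cancel: "transpose (1::nat) 2 \<circ> (transpose 1 2 \<circ> p) = p"
  by (rule ext) simp

lemma even_t12:
  assumes "p permutes {1..(n::nat)}"
  shows "evenperm (transpose 1 2 \<circ> p) \<longleftrightarrow> \<not> evenperm p"
proof -
  have pp: "permutation p" using assms permutation_permutes by blast
  show ?thesis using evenperm_comp[OF permutation_swap_id pp] by (simp add: evenperm_swap)
qed

lemma cyc12:
  assumes "p permutes {1..(n::nat)}"
  shows "cycle_of p 1 \<noteq> cycle_of p 2 \<longleftrightarrow> 2 \<notin> cycle_of p 1"
proof -
  have pp: "permutation p" using assms permutation_permutes by blast
  show ?thesis using cyc_eq[OF pp, of 2 1] cyc_self[of 2 p] by auto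
qed

lemma M12:
  assumes n: "n \<ge> 2" and p: "p permutes {1..n}" and nb: "2 \<notin> cycle_of p 1"
  shows "num_cycles n p = num_cycles n (transpose 1 2 \<circ> p) + 1"
    "2 \<in> cycle_of (transpose 1 2 \<circ> p) 1"
  using merge[OF _ p _ _ _ nb] n unfolding num_cycles_def by auto

lemma S12:
  assumes n: "n \<ge> 2" and p: "p permutes {1..n}" and b: "2 \<in> cycle_of p 1"
  shows "num_cycles n (transpose 1 2 \<circ> p) = num_cycles n p + 1"
    "2 \<notin> cycle_of (transpose 1 2 \<circ> p) 1"
  using split[OF _ p _ _ _ b] n unfolding num_cycles_def by auto

theorem theorem9p2:
  fixes n k :: nat
  assumes "n \<ge> 2" and "k \<le> n - 2"
  shows "a_count n k = stirling1_2 n (n - k)"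
proof -
  have n: "n \<ge> 2" by fact
  define A where "A = {v \<in> alt_group_set n. cm n v = n - k}"
  define B where "B = {p. p permutes {1..n} \<and> num_cycles n p = n - k \<and>
                               cycle_of p 1 \<noteq> cycle_of p 2}"
  have "{v \<in> alt_group_set n. len_T n v = k} = A"
    unfolding A_def using len_eq[OF n] cm_le assms(2) by force
  then have a: "a_count n k = card A" unfolding a_count_def by simp
  have s: "stirling1_2 n (n - k) = card B" unfolding stirling1_2_def B_def ..
  define \<phi> where "\<phi> = (\<lambda>v. if 2 \<in> cycle_of v 1 then transpose 1 2 \<circ> v else v)"
  define \<psi> where "\<psi> = (\<lambda>p. if evenperm p then p else transpose (1::nat) 2 \<circ> p)"
  have sp: "transpose 1 2 permutes {1..n}" by (rule sig_perm[OF n])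
  have "bij_betw \<phi> A B"
  proof (rule bij_betw_byWitness[where f'=\<psi>])
    show "\<forall>a\<in>A. \<psi> (\<phi> a) = a"
    proof
      fix v assume "v \<in> A"
      then have v: "v permutes {1..n}" "evenperm v" unfolding A_def alt_group_set_def by auto
      show "\<psi> (\<phi> v) = v"
        unfolding \<phi>_def \<psi>_def using v even_t12[OF v(1)] tt_cancel by auto
    qed
    show "\<forall>a\<in>B. \<phi> (\<psi> a) = a"
    proof
      fix p assume "p \<in> B"
      then have p: "p permutes {1..n}" "2 \<notin> cycle_of p 1" unfolding B_def using cyc12 by auto
      show "\<phi> (\<psi> p) = p"
        unfolding \<phi>_def \<psi>_def using p M12(2)[OF n p(1) p(2)] tt_cancel by auto
    qed
    show "\<phi> ` A \<subseteq> B"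
    proof
      fix p assume "p \<in> \<phi> ` A"
      then obtain v where v: "v \<in> A" "p = \<phi> v" by auto
      then have vp: "v permutes {1..n}" and cv: "cm n v = n - k"
        unfolding A_def alt_group_set_def by auto
      have vp2: "transpose 1 2 \<circ> v permutes {1..n}" by (rule permutes_compose[OF vp sp])
      show "p \<in> B"
      proof (cases "2 \<in> cycle_of v 1")
        case True
        note S = S12[OF n vp True]
        have "p = transpose 1 2 \<circ> v" using v True unfolding \<phi>_def by simp
        then show ?thesis unfolding B_def using cyc12[OF vp2] S vp2 cv unfolding cm_def by auto
      next
        case False
        note M = M12[OF n vp False]
        have "p = v" using v False unfolding \<phi>_def by simp
        then show ?thesis unfolding B_def using cyc12[OF vp] M vp cv False unfolding cm_def by auto
      qed
    qed
    show "\<psi> ` B \<subseteq> A"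
    proof
      fix v assume "v \<in> \<psi> ` B"
      then obtain p where p: "p \<in> B" "v = \<psi> p" by auto
      then have pp: "p permutes {1..n}" and c: "num_cycles n p = n - k" and nb: "2 \<notin> cycle_of p 1"
        unfolding B_def using cyc12 by auto
      note M = M12[OF n pp nb]
      have pp2: "transpose 1 2 \<circ> p permutes {1..n}" by (rule permutes_compose[OF pp sp])
      show "v \<in> A"
      proof (cases "evenperm p")
        case True
        then have "v = p" using p unfolding \<psi>_def by simp
        then show ?thesis unfolding A_def alt_group_set_def cm_def using True pp c M(1) by auto
      next
        case False
        then have "v = transpose 1 2 \<circ> p" using p unfolding \<psi>_def by simp
        then show ?thesis unfolding A_def alt_group_set_def cm_def
          using False pp2 c M(1) even_t12[OF pp] tt_cancel[of p] by auto
      qed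
    qed
  qed
  then have "card A = card B" by (rule bij_betw_same_card)
  then show ?thesis using a s by simp
qed

end
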